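(* Let $0<q<1/2$, $p=1-q$, and for integers $z\ge1$ let $$P(z)=1-\sum_{k=0}^{z-1}\left(p^zq^k-q^zp^k\right)\binom{k+z-1}{k},\qquad P_{SN}(z)=1-\sum_{k=0}^{z-1}e^{-zq/p}\frac{(zq/p)^k}{k!}\left(1-\left(\frac qp\right)^{z-k}\right).$$ Let $\psi(p)=\frac qp-1-\log\frac qp-\log\frac{1}{4pq}$ (which is $>0$), let $$z_0^*=\max\left(\frac{2}{\pi\left(1-\frac qp\right)^2},\ \frac{1}{2\sqrt2}-\frac{1+\frac1{\sqrt2}}{2}\,\frac{\log\left(\frac{2\psi(p)}{\pi}\right)}{\psi(p)}\right),$$ and let $z_0=\lceil z_0^*\rceil$. Then for every integer $z\ge z_0$ we have $P_{SN}(z)<P(z)$.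
   Context: $P(z)$ is the exact probability of success of a double-spend attack by attackers with relative hash power $q$ after $z$ confirmations, and $P_{SN}(z)$ is Nakamoto's approximation of it. *)

theory Defs
  imports Complex_Main
begin

definition P_exact :: "real \<Rightarrow> nat \<Rightarrow> real" where
  "P_exact q z = (let p = 1 - q in
     1 - (\<Sum>k<z. (p ^ z * q ^ k - q ^ z * p ^ k) * real ((k + z - 1) choose k)))"

definition P_SN :: "real \<Rightarrow> nat \<Rightarrow> real" where
  "P_SN q z = (let p = 1 - q; lam = real z * q / p in
     1 - (\<Sum>k<z. exp (- lam) * lam ^ k / fact k * (1 - (q / p) ^ (z - k))))"

definition psi :: "real \<Rightarrow> real" where
  "psi q = (let p = 1 - q in q / p - 1 - ln (q / p) - ln (1 / (4 * p * q)))"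

definition z0_star :: "real \<Rightarrow> real" where
  "z0_star q = (let p = 1 - q in
     max (2 / (pi * (1 - q / p)^2))
         (1 / (2 * sqrt 2) - (1 + 1 / sqrt 2) / 2 * ln (2 * psi q / pi) / psi q))"

end

theory Submission
  imports Defs "HOL-Analysis.Complex_Transcendental"
begin


lemma geo_aux: "p + q = (1::real) \<Longrightarrow> (\<Sum>k\<le>n. p*q^k) + q^Suc n = 1"
proof (induction n)
  case (Suc n)
  have "p*(q*q^n) + q*(q*q^n) = (p+q)*(q*q^n)" by (simp add: algebra_simps)
  then show ?case using Suc by (simp add: algebra_simps)
qed simp

definition R :: "real \<Rightarrow> real \<Rightarrow> nat \<Rightarrow> nat \<Rightarrow> real" where
  "R p q m n = (\<Sum>k\<le>n. real ((m+k) choose k) * p^(m+1) * q^k)"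

lemma R_rec: "R p q (Suc m) (Suc n) = p * R p q m (Suc n) + q * R p q (Suc m) n"
proof -
  have "R p q (Suc m) (Suc n) = p^(m+2) + (\<Sum>k\<le>n. real ((Suc m + Suc k) choose Suc k) * p^(m+2) * q^Suc k)"
    unfolding R_def by (subst sum.atMost_Suc_shift) simp
  also have "\<dots> = p^(m+2) + (\<Sum>k\<le>n. real ((m + Suc k) choose Suc k) * p^(m+2) * q^Suc k)
      + (\<Sum>k\<le>n. real ((Suc m + k) choose k) * p^(m+2) * q^Suc k)"
    by (simp add: sum.distrib[symmetric] algebra_simps)
  also have "p^(m+2) + (\<Sum>k\<le>n. real ((m + Suc k) choose Suc k) * p^(m+2) * q^Suc k) = p * R p q m (Suc n)"
    unfolding R_def by (subst sum.atMost_Suc_shift) (simp add: sum_distrib_left algebra_simps)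
  also have "(\<Sum>k\<le>n. real ((Suc m + k) choose k) * p^(m+2) * q^Suc k) = q * R p q (Suc m) n"
    unfolding R_def by (simp add: sum_distrib_left algebra_simps)
  finally show ?thesis .
qed

lemma R_W: "p + q = (1::real) \<Longrightarrow> R p q m n + R q p n m = 1"
proof (induction m arbitrary: n)
  case 0
  have "R p q 0 n = (\<Sum>k\<le>n. p*q^k)" unfolding R_def by simp
  moreover have "R q p n 0 = q^Suc n" unfolding R_def by simp
  ultimately show ?case using geo_aux[OF 0] by simp
next
  case (Suc m)
  note oIH = Suc.IH and opr = Suc.prems
  show ?case
  proof (induction n)
    case 0
    have "R p q (Suc m) 0 = p^Suc (Suc m)" unfolding R_def by simp
    moreover have "R q p 0 (Suc m) = (\<Sum>k\<le>Suc m. q*p^k)" unfolding R_def by simp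
    moreover have "q + p = 1" using opr by simp
    ultimately show ?case using geo_aux[of q p "Suc m"] by simp
  next
    case (Suc n)
    have "R p q (Suc m) (Suc n) + R q p (Suc n) (Suc m)
       = p * (R p q m (Suc n) + R q p (Suc n) m) + q * (R p q (Suc m) n + R q p n (Suc m))"
      by (simp add: R_rec algebra_simps)
    also have "\<dots> = 1" using Suc.IH oIH[OF opr, of "Suc n"] opr by simp
    finally show ?case .
  qed
qed

lemma P_exact_eq: "P_exact q (Suc m) = 2 * R q (1-q) m m"
proof -
  have "P_exact q (Suc m) = 1 - R (1-q) q m m + R q (1-q) m m"
    unfolding P_exact_def R_def Let_def
    by (simp add: lessThan_Suc_atMost[symmetric] sum_subtractf sum.distrib algebra_simps add.commute)
  also have "R (1-q) q m m = 1 - R q (1-q) m m" using R_W[of "1-q" q m m] by simp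
  finally show ?thesis by simp
qed



lemma R_lower: assumes "0 \<le> p" "p \<le> 1" "0 \<le> q"
  shows "R q p m m \<ge> real (Suc (2*m) choose m) * q^(m+1) * p^m"
proof -
  have "R q p m m \<ge> (\<Sum>k\<le>m. real ((m+k) choose k) * q^(m+1) * p^m)"
    unfolding R_def
  proof (rule sum_mono)
    fix k assume "k \<in> {..m}"
    then have "p^m \<le> p^k" using assms by (intro power_decreasing) auto
    then show "real ((m+k) choose k) * q^(m+1) * p^m \<le> real ((m+k) choose k) * q^(m+1) * p^k"
      using assms by (intro mult_left_mono) auto
  qed
  also have "(\<Sum>k\<le>m. real ((m+k) choose k) * q^(m+1) * p^m) = real (\<Sum>k\<le>m. (m+k) choose k) * q^(m+1) * p^m"
    by (simp add: sum_distrib_right)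
  also have "(\<Sum>k\<le>m. (m+k) choose k) = Suc (2*m) choose m"
    using sum_choose_lower[of m m] by (simp add: mult_2)
  finally show ?thesis .
qed

lemma central1: "2 * (Suc (2*m) choose m) = (2*Suc m) choose Suc m"
proof -
  have "(Suc (2*m) choose Suc m) = (Suc (2*m) choose m)"
    using binomial_symmetric[of m "Suc (2*m)"] by simp
  then show ?thesis by simp
qed

lemma central2: "real (Suc z) * real ((2*Suc z) choose Suc z) = 2 * (2*z+1) * real ((2*z) choose z)"
proof -
  have a: "Suc (2*z) * ((2*z) choose z) = (Suc (2*z) choose Suc z) * Suc z"
    by (rule Suc_times_binomial_eq)
  have b: "(Suc (2*z) choose Suc z) = (Suc (2*z) choose z)"
    using binomial_symmetric[of z "Suc (2*z)"] by simp
  have "Suc z * ((2*Suc z) choose Suc z) = Suc z * (2 * (Suc (2*z) choose z))"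
    using central1[of z] by (simp only:)
  also have "\<dots> = 2 * ((Suc (2*z) choose Suc z) * Suc z)" using b by (simp only: mult_ac)
  also have "\<dots> = 2 * (Suc (2*z) * ((2*z) choose z))" using a by (simp only:)
  finally have "Suc z * ((2*Suc z) choose Suc z) = 2 * (Suc (2*z) * ((2*z) choose z))" .
  then have "real (Suc z * ((2*Suc z) choose Suc z)) = real (2 * (Suc (2*z) * ((2*z) choose z)))"
    by (simp only:)
  then show ?thesis by (simp only: of_nat_mult of_nat_Suc) (simp del: binomial_Suc_Suc add: algebra_simps)
qed

lemma ratio_aux: fixes z a :: real assumes "z > 0"
  shows "(z+1) * (a * (2*z+1) / (2*z+2))^2 = (z * a^2) * ((2*z+1)^2 / (4*z*(z+1)))"
proof -
  have h1: "2*z+2 \<noteq> 0" "4*z*(z+1) \<noteq> 0" "z+1 \<noteq> 0" using assms by auto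
  show ?thesis using h1 unfolding power2_eq_square by (simp add: divide_simps) (simp add: algebra_simps)
qed

lemma central_bound: assumes "3 \<le> z"
  shows "75/256 \<le> real z * (real ((2*z) choose z) / 4^z)^2"
  using assms
proof (induction z rule: dec_induct)
  case base
  have "(6 choose 3) = (20::nat)" by code_simp
  thus ?case by (simp add: power2_eq_square)
next
  case (step z)
  let ?a = "real ((2*z) choose z) / 4^z"
  have c2: "real ((2*Suc z) choose Suc z) = 2 * (2*real z+1) * real ((2*z) choose z) / real (Suc z)"
    using central2[of z] by (simp del: binomial_Suc_Suc add: field_simps)
  have eq: "real ((2*Suc z) choose Suc z) / 4^Suc z = ?a * (2*real z+1) / (2*real z+2)"
    unfolding c2 by (simp del: binomial_Suc_Suc add: divide_simps) (simp add: algebra_simps)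
  have zp: "real z > 0" using step by simp
  have "real (Suc z) * (?a * (2*real z+1) / (2*real z+2))^2 = (real z * ?a^2) * ((2*real z+1)^2 / (4*real z*(real z+1)))"
    unfolding of_nat_Suc add.commute[of 1] by (rule ratio_aux[OF zp])
  also have "\<dots> \<ge> real z * ?a^2"
  proof -
    have d: "4*real z*(real z+1) > 0" using zp by simp
    have "(2*real z+1)^2 \<ge> 4*real z*(real z+1)" by (simp add: power2_eq_square algebra_simps)
    then have "(2*real z+1)^2 / (4*real z*(real z+1)) \<ge> 1" using d by (simp add: le_divide_eq)
    moreover have "real z * ?a^2 \<ge> 0" by simp
    ultimately show ?thesis using mult_left_mono[of 1 "(2*real z+1)^2 / (4*real z*(real z+1))" "real z * ?a^2"] by simp
  qed
  finally show ?case using step eq by simp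
qed



lemma exp_sums_real: "(\<lambda>n. x^n / fact n) sums exp (x::real)"
  using exp_converges[of x] by (simp add: divide_inverse_commute scaleR_conv_of_real)

lemma exp_tail: "exp (x::real) = (\<Sum>k<z. x^k / fact k) + (\<Sum>n. x^(n+z) / fact (n+z))"
  using suminf_split_initial_segment[OF sums_summable[OF exp_sums_real[of x]], where k=z] sums_unique[OF exp_sums_real[of x]]
  by simp

lemma tail_summable: "summable (\<lambda>n. (x::real)^(n+z) / fact (n+z))"
  using sums_summable[OF sums_split_initial_segment[OF exp_sums_real[of x], of z]] by simp

lemma PSN_bound:
  assumes q0: "0 < q" and q1: "q < 1/2" and z1: "z \<ge> 1"
  shows "P_SN q z < exp (real z - real z * (q/(1-q))) * (q/(1-q))^z"
proof -
  define p where "p = 1 - q"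
  define r where "r = q / p"
  have p0: "p > 0" using q1 unfolding p_def by simp
  have r0: "r > 0" and r1: "r < 1" using q0 q1 unfolding r_def p_def by (auto simp: field_simps)
  define l where "l = real z * r"
  have lq: "real z * q / p = l" unfolding l_def r_def by simp
  define S where "S = (\<Sum>k<z. real z ^ k / fact k)"
  define T1 where "T1 = (\<Sum>n. l^(n+z) / fact (n+z))"
  define T2 where "T2 = (\<Sum>n. real z^(n+z) / fact (n+z))"
  have e1: "exp l = (\<Sum>k<z. l^k / fact k) + T1" unfolding T1_def by (rule exp_tail)
  have e2: "exp (real z) = S + T2" unfolding T2_def S_def by (rule exp_tail)
  have key: "(\<Sum>k<z. exp (-l) * l^k / fact k * (r ^ (z - k))) = exp (-l) * r^z * S"
    unfolding S_def sum_distrib_left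
  proof (rule sum.cong[OF refl])
    fix k assume "k \<in> {..<z}"
    then have "r^z = r^k * r^(z-k)" by (simp add: power_add[symmetric])
    then show "exp (-l) * l^k / fact k * (r ^ (z - k)) = exp (- l) * r ^ z * (real z ^ k / fact k)"
      unfolding l_def by (simp add: power_mult_distrib field_simps)
  qed
  have PSN: "P_SN q z = exp (-l) * (T1 + r^z * S)"
  proof -
    have "P_SN q z = 1 - (\<Sum>k<z. exp (-l) * l^k / fact k) + (\<Sum>k<z. exp (-l) * l^k / fact k * (r ^ (z - k)))"
    proof -
      have "(\<Sum>k<z. exp (-l) * l^k / fact k * (1 - r ^ (z - k))) = (\<Sum>k<z. exp (-l) * l^k / fact k) - (\<Sum>k<z. exp (-l) * l^k / fact k * (r ^ (z - k)))"
        by (simp add: right_diff_distrib sum_subtractf)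
      then show ?thesis unfolding P_SN_def Let_def p_def[symmetric] lq r_def[symmetric] by simp
    qed
    also have "1 = exp (-l) * exp l" by (simp add: exp_minus)
    also have "(\<Sum>k<z. exp (-l) * l^k / fact k) = exp (-l) * (\<Sum>k<z. l^k / fact k)"
      by (simp add: sum_distrib_left)
    finally show ?thesis unfolding key e1 by (simp add: algebra_simps)
  qed
  have T: "T1 < r^z * T2"
  proof -
    have s1: "summable (\<lambda>n. l^(n+z) / fact (n+z))" by (rule tail_summable)
    have s2: "summable (\<lambda>n. r^z * (real z^(n+z) / fact (n+z)))"
      by (rule summable_mult[OF tail_summable])
    have le: "l^(n+z) / fact (n+z) \<le> r^z * (real z^(n+z) / fact (n+z))" for n
    proof -
      have "r^(n+z) \<le> r^z" using r0 r1 by (intro power_decreasing) auto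
      then have "r^(n+z) * real z^(n+z) \<le> r^z * real z^(n+z)" by (intro mult_right_mono) auto
      then show ?thesis unfolding l_def by (simp add: power_mult_distrib divide_right_mono mult.commute)
    qed
    have lt: "l^(1+z) / fact (1+z) < r^z * (real z^(1+z) / fact (1+z))"
    proof -
      have "r^(1+z) < r^z" using r0 r1 by simp
      moreover have "real z^(1+z) > 0" using z1 by simp
      ultimately have "r^(1+z) * real z^(1+z) < r^z * real z^(1+z)" by (intro mult_strict_right_mono) auto
      moreover have "l^(1+z) = r^(1+z) * real z^(1+z)" unfolding l_def by (simp add: power_mult_distrib)
      ultimately show ?thesis using divide_strict_right_mono[of "r^(1+z) * real z^(1+z)" "r^z * real z^(1+z)" "fact (1+z)"]
        by (simp add: fact_gt_zero)
    qed
    have "0 < (\<Sum>n. r^z * (real z^(n+z) / fact (n+z)) - l^(n+z) / fact (n+z))"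
      using summable_diff[OF s2 s1] le lt by (subst suminf_pos_iff) (auto intro!: exI[of _ 1])
    then show ?thesis unfolding T1_def T2_def using suminf_diff[OF s2 s1] suminf_mult[OF tail_summable] by simp
  qed
  have "P_SN q z < exp (-l) * (r^z * T2 + r^z * S)" unfolding PSN using T by simp
  also have "\<dots> = exp (-l) * r^z * exp (real z)" unfolding e2 by (simp add: algebra_simps)
  also have "\<dots> = exp (real z - real z * r) * r^z" unfolding l_def by (simp add: exp_diff exp_minus field_simps)
  finally show ?thesis unfolding r_def p_def .
qed



lemma exp_lower4: assumes "0 < x" shows "1 + x + x^2/2 + x^3/6 < exp (x::real)"
proof -
  have "(\<Sum>n<4. x^n / fact n) < exp x"
    using sum_less_suminf[OF sums_summable[OF exp_sums_real[of x]], of 4] sums_unique[OF exp_sums_real[of x]] assms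
    by simp
  moreover have "(\<Sum>n<4. x^n / fact n) = 1 + x + x^2/2 + x^3/6"
    by (simp add: numeral_eq_Suc fact_numeral)
  ultimately show ?thesis by simp
qed

lemma ln2_less: "ln 2 < (0.71::real)"
proof -
  have "2 < exp (0.71::real)" using exp_lower4[of "0.71"] by (simp add: power2_eq_square power3_eq_cube)
  then show ?thesis by (metis exp_less_cancel_iff exp_ln zero_less_numeral)
qed

lemma e_gt: "8/3 < exp (1::real)"
  using exp_lower4[of 1] by simp

lemma sqrt2_bounds: "1.414 \<le> sqrt (2::real)" "sqrt (2::real) \<le> 1.42"
proof -
  show "1.414 \<le> sqrt (2::real)" by (rule real_le_rsqrt) (simp add: power2_eq_square)
  show "sqrt (2::real) \<le> 1.42" by (rule real_le_lsqrt) (auto simp: power2_eq_square)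
qed



lemma psi_alt: assumes "0 < q" "q < 1"
  shows "psi q = 1/(1-q) - 2 + 2 * ln 2 + 2 * ln (1-q)"
proof -
  define p where "p = 1 - q"
  have p0: "p > 0" using assms unfolding p_def by simp
  have "ln (q/p) = ln q - ln p" using assms p0 by (simp add: ln_div)
  moreover have "ln (1/(4*p*q)) = - (2 * ln 2 + ln p + ln q)"
  proof -
    have "ln (4*p*q) = ln 4 + ln p + ln q" using assms p0 by (simp add: ln_mult)
    moreover have "ln (4::real) = 2 * ln 2" using ln_realpow[of 2 2] by simp
    moreover have "ln (1/(4*p*q)) = - ln (4*p*q)" using assms p0 by (simp add: ln_div)
    ultimately show ?thesis by simp
  qed
  moreover have "q/p - 1 = 1/p - 2" using p0 unfolding p_def by (simp add: field_simps)
  ultimately show ?thesis unfolding psi_def Let_def p_def[symmetric] by simp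
qed

lemma psi_pos: assumes "0 < q" "q < 1/2" shows "0 < psi q"
proof -
  define y where "y = 2 * (1 - q)"
  have y1: "1 < y" and y2: "y < 2" using assms unfolding y_def by auto
  have "ln y = ln 2 + ln (1-q)" unfolding y_def using assms ln_mult[of 2 "1-q"] by simp
  moreover have "2/y = 1/(1-q)" unfolding y_def using assms by (simp add: field_simps)
  ultimately have "psi q = 2/y - 2 + 2 * ln y"
    using psi_alt[of q] assms by simp
  moreover have "ln y > 1 - 1/y"
  proof -
    define s where "s = sqrt y"
    have s1: "s > 1" using y1 unfolding s_def by simp
    have ys: "y = s^2" using y1 unfolding s_def by simp
    have "ln s \<ge> 1 - 1/s" using ln_le_minus_one[of "1/s"] s1 by (simp add: ln_div)
    moreover have "ln y = 2 * ln s" unfolding ys using s1 by (simp add: ln_realpow)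
    moreover have "2 * (1 - 1/s) > 1 - 1/s^2"
    proof -
      have "(1 - 1/s)^2 > 0" using s1 by simp
      moreover have "2*(1-1/s) - (1 - 1/s^2) = (1-1/s)^2" using s1 by (simp add: power2_eq_square field_simps)
      ultimately show ?thesis by linarith
    qed
    ultimately show ?thesis unfolding ys by simp
  qed
  ultimately have "y * psi q > 0" using y1 by (simp add: field_simps)
  then show ?thesis using y1 by (simp add: zero_less_mult_iff)
qed

lemma psi_small: assumes "0 < q" "q < 1/2" shows "psi q < 0.42"
proof -
  define p where "p = 1 - q"
  have p1: "1/2 < p" and p2: "p < 1" using assms unfolding p_def by auto
  have "ln p \<le> p - 1" using p1 by (intro ln_le_minus_one) simp
  moreover have "1/p - 2 + 2 * (p - 1) < -1"
  proof -
    have "(2*p - 1) * (p - 1) < 0" using p1 p2 by (simp add: mult_pos_neg)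
    then show ?thesis using p1 by (simp add: field_simps algebra_simps)
  qed
  ultimately have "psi q < 2 * ln 2 - 1" using psi_alt[of q] assms unfolding p_def by simp
  then show ?thesis using ln2_less by simp
qed

lemma psi_exp: assumes "0 < q" "q < 1/2"
  shows "exp (- real z * psi q) * (4*(1-q)*q)^z = exp (real z - real z * (q/(1-q))) * (q/(1-q))^z"
proof -
  define p where "p = 1 - q"
  define r where "r = q/p"
  define x where "x = 4*p*q"
  have p0: "p > 0" "q > 0" using assms unfolding p_def by auto
  have r0: "r > 0" and x0: "x > 0" using p0 unfolding r_def x_def by auto
  have h: "psi q = r - 1 - ln r - ln (1/x)" unfolding psi_def Let_def p_def[symmetric] r_def x_def by simp
  have "- real z * psi q = real z * (1 - r) + real z * ln r + real z * ln (1/x)"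
    unfolding h by (simp add: algebra_simps)
  then have "exp (- real z * psi q) = exp (real z * (1 - r)) * r^z * (1/x)^z"
    using r0 x0 by (simp add: exp_add exp_of_nat_mult)
  then have "exp (- real z * psi q) * x^z = exp (real z * (1 - r)) * r^z"
    using x0 by (simp add: power_one_over field_simps)
  then show ?thesis unfolding x_def r_def p_def by (simp add: algebra_simps)
qed



lemma P_lower: assumes "0 < q" "q < 1/2" "z \<ge> 1"
  shows "real ((2*z) choose z) * ((1-q)*q)^z \<le> P_exact q z"
proof -
  define p where "p = 1 - q"
  have p0: "0 \<le> p" "p \<le> 1" using assms unfolding p_def by auto
  obtain m where zm: "z = Suc m" using assms by (cases z) auto
  have "P_exact q z = 2 * R q p m m" unfolding zm p_def by (rule P_exact_eq)
  also have "\<dots> \<ge> 2 * (real (Suc (2*m) choose m) * q^(m+1) * p^m)"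
    using R_lower[OF p0 less_imp_le[OF assms(1)], of m] by simp
  finally have "P_exact q z \<ge> real (2 * (Suc (2*m) choose m)) * q^(m+1) * p^m" by simp
  also have "real (2 * (Suc (2*m) choose m)) = real ((2*z) choose z)" unfolding zm central1 by simp
  finally have h: "P_exact q z \<ge> real ((2*z) choose z) * q^z * p^m" unfolding zm by simp
  have "p^z \<le> p^m" unfolding zm using p0 by (intro power_decreasing) auto
  then have "real ((2*z) choose z) * q^z * p^z \<le> real ((2*z) choose z) * q^z * p^m"
    using assms by (intro mult_left_mono) auto
  with h show ?thesis unfolding p_def by (simp add: power_mult_distrib mult.commute mult.left_commute)
qed

theorem mainTheorem17:
  fixes q :: real and z :: nat
  assumes "0 < q" and "q < 1/2"
    and "z \<ge> 1"
    and "real z \<ge> real_of_int \<lceil>z0_star q\<rceil>"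
  shows "P_SN q z < P_exact q z"
proof -
  define w where "w = psi q"
  have w0: "0 < w" and w1: "w < 0.42" unfolding w_def using psi_pos psi_small assms by auto
  define c where "c = (1 + 1 / sqrt 2) / 2"
  define a where "a = 1 / (2 * sqrt (2::real))"
  have a0: "a > 0" unfolding a_def by simp
  have s2: "1.414 \<le> sqrt (2::real)" "sqrt (2::real) \<le> 1.42" by (rule sqrt2_bounds)+
  have c0: "c \<ge> 0.852"
  proof -
    have "1 / sqrt 2 \<ge> 1 / (1.42::real)" using s2 by (intro divide_left_mono) auto
    then show ?thesis unfolding c_def by simp
  qed
  have hz: "real z \<ge> a - c * ln (2 * w / pi) / w"
  proof -
    have "real z \<ge> z0_star q" using assms(4) by linarith
    moreover have "z0_star q \<ge> a - c * ln (2 * w / pi) / w"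
      unfolding z0_star_def Let_def a_def c_def w_def by simp
    ultimately show ?thesis by linarith
  qed
  have pi1: "pi \<ge> 3.14" using pi_approx by simp
  have e1: "exp 1 > (8/3::real)" by (rule e_gt)
  have e2: "exp 1 < (2.72::real)" using e_less_272 by simp
  have z3: "z \<ge> 3"
  proof -
    have "2 * w / pi < exp (-1)"
    proof -
      have "2 * w / pi < 0.84 / 3.14" using w0 w1 pi1 by (simp add: field_simps)
      also have "\<dots> < 1 / 2.72" by simp
      also have "\<dots> < exp (-1)" using e2 by (simp add: exp_minus field_simps)
      finally show ?thesis .
    qed
    then have "ln (2 * w / pi) < -1" using w0 by (metis ln_exp ln_less_cancel_iff divide_pos_pos pi_gt_zero zero_less_mult_iff zero_less_numeral exp_gt_zero)
    then have "c * (- ln (2 * w / pi)) \<ge> c * 1" using c0 by (intro mult_left_mono) auto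
    then have "- c * ln (2 * w / pi) \<ge> c" by simp
    then have "- c * ln (2 * w / pi) / w \<ge> c / w" using w0 divide_right_mono[of c "- c * ln (2 * w / pi)" w] by simp
    moreover have "c / w > 2" using c0 w0 w1 by (simp add: field_simps)
    ultimately have "real z > 2" using hz a0 by simp
    then show ?thesis by simp
  qed
  define u where "u = real z * w"
  have u0: "u > 0" using w0 assms(3) unfolding u_def by simp
  have eu: "exp (- u / c) \<le> 2 * w / pi"
  proof -
    have "(a - c * ln (2 * w / pi) / w) * w = a * w - c * ln (2 * w / pi)" using w0 by (simp add: field_simps)
    then have "u \<ge> a * w - c * ln (2 * w / pi)"
      using mult_right_mono[OF hz less_imp_le[OF w0]] unfolding u_def by simp
    then have "c * ln (2 * w / pi) \<ge> - u" using a0 w0 by (smt (verit) mult_pos_pos)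
    then have "ln (2 * w / pi) \<ge> - u / c" using c0 by (simp add: field_simps)
    then have "exp (- u / c) \<le> exp (ln (2 * w / pi))" by simp
    then show ?thesis using w0 by simp
  qed
  define th where "th = 2 * sqrt 2 - (2::real)"
  have th0: "th \<ge> 0.828" unfolding th_def using s2 by simp
  have cth: "2 - th = 1 / c"
  proof -
    define s where "s = sqrt (2::real)"
    have ss: "s * s = 2" "s > 0" unfolding s_def by auto
    have "1 / c = 2 * s / (s + 1)" unfolding c_def s_def[symmetric] using ss by (simp add: field_simps)
    moreover have "(4 - 2 * s) * (s + 1) = 2 * s" using ss by (simp add: algebra_simps)
    then have "4 - 2 * s = 2 * s / (s + 1)" using ss by (simp add: eq_divide_eq)
    ultimately show ?thesis unfolding th_def s_def[symmetric] by simp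
  qed
  have ub: "u \<le> exp (th * u) / (exp 1 * th)"
  proof -
    have "1 + (th * u - 1) \<le> exp (th * u - 1)" by (rule exp_ge_add_one_self)
    then have "th * u \<le> exp (th * u) / exp 1" by (simp add: exp_diff)
    then show ?thesis using th0 by (simp add: field_simps)
  qed
  have k1: "exp (-2*u) * u \<le> (2*w/pi) / (exp 1 * th)"
  proof -
    have "exp (-2*u) * u \<le> exp (-2*u) * (exp (th * u) / (exp 1 * th))"
      using ub by (intro mult_left_mono) auto
    also have "exp (-2*u) * exp (th * u) = exp (- u / c)"
    proof -
      have "-2*u + th*u = -((2 - th)*u)" by (simp add: algebra_simps)
      also have "\<dots> = - u / c" unfolding cth by simp
      finally show ?thesis by (simp add: exp_add[symmetric])
    qed
    then have "exp (-2*u) * (exp (th * u) / (exp 1 * th)) = exp (- u / c) / (exp 1 * th)" by simp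
    also have "\<dots> \<le> (2*w/pi) / (exp 1 * th)" using eu th0 by (intro divide_right_mono) auto
    finally show ?thesis .
  qed
  have k2: "exp (-2*u) * real z \<le> 75/256"
  proof -
    have "exp (-2*u) * real z = exp (-2*u) * u / w" unfolding u_def using w0 by simp
    also have "\<dots> \<le> (2*w/pi) / (exp 1 * th) / w" using k1 w0 by (intro divide_right_mono) auto
    also have "\<dots> = 2 / (pi * exp 1 * th)" using w0 by (simp add: field_simps)
    also have "\<dots> \<le> 2 / (512/75)"
    proof -
      have "3.14 * (8/3) \<le> pi * exp (1::real)" using mult_mono[of "3.14" pi "8/3" "exp 1"] pi1 e1 by simp
      then have "3.14 * (8/3) * 0.828 \<le> pi * exp 1 * th" using th0 mult_mono[of "3.14 * (8/3)" "pi * exp 1" "0.828" th] by simp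
      then have "512/75 \<le> pi * exp 1 * th" by simp
      then show ?thesis by (intro divide_left_mono) auto
    qed
    finally show ?thesis by simp
  qed
  define A where "A = real ((2*z) choose z) / 4^z"
  have A0: "A \<ge> 0" unfolding A_def by simp
  have cb: "75/256 \<le> real z * A^2" unfolding A_def by (rule central_bound[OF z3])
  have "exp (-u) ^ 2 \<le> A ^ 2"
  proof -
    have "exp (-u) ^ 2 = exp (-2*u)" by (simp add: exp_of_nat_mult[symmetric] power2_eq_square exp_add[symmetric])
    moreover have "real z > 0" using z3 by simp
    moreover have "exp (-2*u) \<le> (75/256) / real z" using k2 \<open>real z > 0\<close> by (simp add: pos_le_divide_eq)
    moreover have "(75/256) / real z \<le> A^2" using cb \<open>real z > 0\<close> by (simp add: pos_divide_le_eq algebra_simps)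
    ultimately show ?thesis by simp
  qed
  then have eA: "exp (-u) \<le> A" using A0 by (rule power2_le_imp_le)
  have "P_SN q z < exp (real z - real z * (q/(1-q))) * (q/(1-q))^z" by (rule PSN_bound[OF assms(1-3)])
  also have "\<dots> = exp (- u) * (4*(1-q)*q)^z"
    unfolding u_def w_def using psi_exp[OF assms(1,2), of z] by simp
  also have "\<dots> \<le> A * (4*(1-q)*q)^z" using eA assms(1,2) by (intro mult_right_mono) auto
  also have "\<dots> = real ((2*z) choose z) * ((1-q)*q)^z"
  proof -
    have "(4*(1-q)*q)^z = 4^z*((1-q)*q)^z" by (metis mult.assoc power_mult_distrib)
    then show ?thesis unfolding A_def by simp
  qed
  also have "\<dots> \<le> P_exact q z" by (rule P_lower[OF assms(1-3)])
  finally show ?thesis .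
qed


end
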